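(* Fix a calendar time $t$ and a cutoff $T^*>0$. Assume (Adjusted Assumption 1) $\phi(u)=\beta_{T^*}$ for all $u\ge T^*$, for some constant $\beta_{T^*}$; and (Adjusted Assumption 2) $f_t(t-u)=f_t(t)$ for all $u\in[0,T^*]$, where $f_t(s)$ is the conditional density at $s$ of $T$ given $\{T\le t,A(t)=1\}$. Let $\Omega_{T^*}=\int_0^{T^*}\phi(u)\,du$ and assume $\Omega_{T^*}-\beta_{T^*}T^*\neq0$, $p(t)<1$, and $p$ continuous. Then $$P_{rec}(t)=(\Omega_{T^*}-\beta_{T^*}T^* )\,\lambda(t)\{1-p(t)\}+p(t)\beta_{T^*},\qquad\text{i.e.}\qquad \lambda(t)=\frac{P_{rec}(t)-\beta_{T^*}p(t)}{\{1-p(t)\}(\Omega_{T^*}-\beta_{T^*}T^* )}.$$ (Consequently the adjusted estimator $\tilde\lambda=(N_{rec}-N_{pos}\hat\beta_{T^*})/\{N_{neg}(\hat\Omega_{T^*}-\hat\beta_{T^*}T^* )\}$ is the plug-in estimator of $\lambda(t)$.)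
   Context: $T$ is the (calendar) HIV infection time of a subject, a random variable with densities as needed; $A(t)\in\{0,1\}$ indicates eligibility for the target population at calendar time $t$. Prevalence: $p(t)=\Pr(T\le t\mid A(t)=1)$. Incidence: $\lambda(t)=\lim_{dt\to0}\frac1{dt}\Pr(t\le T<t+dt\mid T\ge t, A(t)=1)$. $M$ is the biomarker value of a recency test and $\mathcal R$ a fixed "test-recent" region. $\phi(u)=\Pr(M\in\mathcal R\mid T=t-u, A(t)=1)$ for $u\ge0$, assumed not to depend on $t$. $P_{rec}(t)=\Pr(M\in\mathcal R, T\le t\mid A(t)=1)$. $\Omega_{T^*}$ is the mean duration of recent infection (MDRI), $\beta_{T^*}$ the false-recent rate (FRR). $N_{rec},N_{pos},N_{neg}$ are the numbers of test-recent, HIV-positive and HIV-negative subjects in a random sample from the population eligible at $t$; hats denote estimates. *)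

theory Defs
  imports "HOL-Probability.Probability"
begin

definition elig :: "'a measure \<Rightarrow> (real \<Rightarrow> 'a \<Rightarrow> bool) \<Rightarrow> real \<Rightarrow> 'a set" where
  "elig P A t = {\<omega> \<in> space P. A t \<omega>}"

definition cprob :: "'a measure \<Rightarrow> 'a set \<Rightarrow> 'a set \<Rightarrow> real" where
  "cprob P X Y = measure P (X \<inter> Y) / measure P Y"

definition prevalence :: "'a measure \<Rightarrow> ('a \<Rightarrow> real) \<Rightarrow> (real \<Rightarrow> 'a \<Rightarrow> bool) \<Rightarrow> real \<Rightarrow> real" where
  "prevalence P T A t = cprob P {\<omega> \<in> space P. T \<omega> \<le> t} (elig P A t)"

definition P_rec :: "'a measure \<Rightarrow> ('a \<Rightarrow> real) \<Rightarrow> (real \<Rightarrow> 'a \<Rightarrow> bool) \<Rightarrow> ('a \<Rightarrow> 'b) \<Rightarrow> 'b set \<Rightarrow> real \<Rightarrow> real" where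
  "P_rec P T A Mk R t = cprob P {\<omega> \<in> space P. Mk \<omega> \<in> R \<and> T \<omega> \<le> t} (elig P A t)"

definition hazard_quot :: "'a measure \<Rightarrow> ('a \<Rightarrow> real) \<Rightarrow> (real \<Rightarrow> 'a \<Rightarrow> bool) \<Rightarrow> real \<Rightarrow> real \<Rightarrow> real" where
  "hazard_quot P T A t dt =
     cprob P {\<omega> \<in> space P. t \<le> T \<omega> \<and> T \<omega> < t + dt}
             ({\<omega> \<in> space P. t \<le> T \<omega>} \<inter> elig P A t) / dt"

definition incidence :: "'a measure \<Rightarrow> ('a \<Rightarrow> real) \<Rightarrow> (real \<Rightarrow> 'a \<Rightarrow> bool) \<Rightarrow> real \<Rightarrow> real" where
  "incidence P T A t = Lim (at_right 0) (hazard_quot P T A t)"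

definition cond_density :: "'a measure \<Rightarrow> ('a \<Rightarrow> real) \<Rightarrow> 'a set \<Rightarrow> (real \<Rightarrow> real) \<Rightarrow> bool" where
  "cond_density P T X f \<longleftrightarrow>
     (\<forall>s. 0 \<le> f s) \<and> distributed (uniform_measure P X) lborel T (\<lambda>s. ennreal (f s))"

text \<open>phi(u) = Pr(M in R | T = t - u, A(t) = 1), u \<ge> 0, as a version of the conditional
  probability: for every Borel B \<subseteq> (-\<infinity>, t],
  Pr(M in R, T in B | A(t)=1) = \<integral>_B phi(t - s) dP_{T | A(t)=1}(s).\<close>
definition is_recency_fn :: "'a measure \<Rightarrow> ('a \<Rightarrow> real) \<Rightarrow> (real \<Rightarrow> 'a \<Rightarrow> bool) \<Rightarrow> ('a \<Rightarrow> 'b) \<Rightarrow> 'b set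
    \<Rightarrow> real \<Rightarrow> (real \<Rightarrow> real) \<Rightarrow> bool" where
  "is_recency_fn P T A Mk R t \<phi> \<longleftrightarrow>
     \<phi> \<in> borel_measurable borel \<and> (\<forall>u\<ge>0. 0 \<le> \<phi> u \<and> \<phi> u \<le> 1) \<and>
     (\<forall>B \<in> sets borel. B \<subseteq> {..t} \<longrightarrow>
        cprob P {\<omega> \<in> space P. Mk \<omega> \<in> R \<and> T \<omega> \<in> B} (elig P A t) =
        (LINT s:B | distr (uniform_measure P (elig P A t)) lborel T. \<phi> (t - s)))"

definition MDRI :: "(real \<Rightarrow> real) \<Rightarrow> real \<Rightarrow> real" where
  "MDRI \<phi> Ts = (LBINT u=0..Ts. \<phi> u)"

end

theory Submission
  imports Defs
begin

lemma dens_integrable: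
  fixes g :: "real \<Rightarrow> real"
  assumes gm: "g \<in> borel_measurable borel" and g0: "\<And>s. 0 \<le> g s"
    and ps: "prob_space (density lborel (\<lambda>s. ennreal (g s)))"
  shows "integrable lborel g"
proof -
  have "emeasure (density lborel (\<lambda>s. ennreal (g s))) UNIV = 1"
    using prob_space.emeasure_space_1[OF ps] by simp
  then have "(\<integral>\<^sup>+ x. ennreal (g x) \<partial>lborel) = 1"
    using gm by (simp add: emeasure_density)
  then show ?thesis using gm g0
    by (intro integrableI_nonneg) (auto simp: )
qed

lemma dens_measure:
  fixes g :: "real \<Rightarrow> real"
  assumes gm: "g \<in> borel_measurable borel" and g0: "\<And>s. 0 \<le> g s"
    and ps: "prob_space (density lborel (\<lambda>s. ennreal (g s)))"
    and A: "A \<in> sets borel"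
  shows "measure (density lborel (\<lambda>s. ennreal (g s))) A = (LINT x:A|lborel. g x)"
proof -
  have int: "integrable lborel (\<lambda>x. g x * indicator A x)"
    using integrable_mult_indicator[of A lborel g] dens_integrable[OF gm g0 ps] A by (simp add: mult.commute)
  have "emeasure (density lborel (\<lambda>s. ennreal (g s))) A = (\<integral>\<^sup>+ x. ennreal (g x) * indicator A x \<partial>lborel)"
    using gm A by (simp add: emeasure_density)
  also have "\<dots> = (\<integral>\<^sup>+ x. ennreal (g x * indicator A x) \<partial>lborel)"
    by (intro nn_integral_cong) (auto simp: indicator_def)
  also have "\<dots> = ennreal (\<integral> x. g x * indicator A x \<partial>lborel)"
    using int g0 by (intro nn_integral_eq_integral) auto
  finally show ?thesis
    unfolding measure_def set_lebesgue_integral_def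
    using g0 by (simp add: mult.commute integral_nonneg_AE)
qed

lemma avg_bound:
  fixes g :: "real \<Rightarrow> real"
  assumes gm: "g \<in> borel_measurable borel" and g0: "\<And>s. 0 \<le> g s"
    and ps: "prob_space (density lborel (\<lambda>s. ennreal (g s)))"
    and a: "a \<le> b" and bnd: "\<And>x. x \<in> {a..b} \<Longrightarrow> \<bar>g x - c\<bar> \<le> e"
    and S: "S \<in> sets borel" "S \<subseteq> {a..b}"
  shows "\<bar>measure (density lborel (\<lambda>s. ennreal (g s))) S - c * measure lborel S\<bar> \<le> e * measure lborel S"
proof -
  have gi: "integrable lborel g" by (rule dens_integrable[OF gm g0 ps])
  have fin: "emeasure lborel S < \<infinity>"
    using S emeasure_mono[of S "{a..b}" lborel] a by (simp add: order.strict_trans1)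
  have si: "set_integrable lborel S g" using integrable_mult_indicator[of S lborel g] gi S
    by (simp add: set_integrable_def)
  have ci: "set_integrable lborel S (\<lambda>_. c)" using fin S
    using integrable_indicator[of S lborel] integrable_mult_right
    by (auto simp: set_integrable_def mult.commute)
  have ci2: "set_integrable lborel S (\<lambda>_. e)" using fin S
    using integrable_indicator[of S lborel] integrable_mult_right
    by (auto simp: set_integrable_def mult.commute)
  have di: "set_integrable lborel S (\<lambda>x. g x - c)"
    using si ci by (rule set_integral_diff)
  have "measure (density lborel (\<lambda>s. ennreal (g s))) S - c * measure lborel S
      = (LINT x:S|lborel. g x) - (LINT x:S|lborel. c)"
    using dens_measure[OF gm g0 ps S(1)] S fin by (simp add: set_integral_const less_top)
  also have "\<dots> = (LINT x:S|lborel. g x - c)"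
    using si ci by (simp add: set_integral_diff)
  finally have eq: "measure (density lborel (\<lambda>s. ennreal (g s))) S - c * measure lborel S = (LINT x:S|lborel. g x - c)" .
  have "\<bar>LINT x:S|lborel. g x - c\<bar> \<le> (LINT x:S|lborel. \<bar>g x - c\<bar>)"
    using set_integral_norm_bound[OF di] by simp
  also have "\<dots> \<le> (LINT x:S|lborel. e)"
    using di ci2 bnd S by (intro set_integral_mono) (auto simp: set_integrable_abs)
  also have "\<dots> = e * measure lborel S"
    using S fin by (simp add: set_integral_const less_top)
  finally show ?thesis using eq by simp
qed


lemma cont_eps:
  fixes g :: "real \<Rightarrow> real"
  assumes "isCont g t" "e > 0"
  obtains d where "d > 0" "\<And>x. \<bar>x - t\<bar> < d \<Longrightarrow> \<bar>g x - g t\<bar> \<le> e"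
proof -
  from assms obtain d where d: "d > 0" "\<And>x. x \<noteq> t \<Longrightarrow> \<bar>x - t\<bar> < d \<Longrightarrow> \<bar>g x - g t\<bar> < e"
    unfolding isCont_def LIM_eq by auto
  show ?thesis
    by (rule that[OF d(1)]) (metis d(2) abs_zero diff_self less_eq_real_def assms(2))
qed

lemma hazard_lim:
  fixes g :: "real \<Rightarrow> real"
  assumes gm: "g \<in> borel_measurable borel" and g0: "\<And>s. 0 \<le> g s"
    and ps: "prob_space (density lborel (\<lambda>s. ennreal (g s)))"
    and gc: "isCont g t"
  shows "((\<lambda>h. measure (density lborel (\<lambda>s. ennreal (g s))) {t..<t+h} / h) \<longlongrightarrow> g t) (at_right 0)"
proof (rule tendstoI)
  fix e :: real assume e: "e > 0"
  obtain d where d: "d > 0" "\<And>x. \<bar>x - t\<bar> < d \<Longrightarrow> \<bar>g x - g t\<bar> \<le> e/2"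
    using cont_eps[OF gc, of "e/2"] e by auto
  show "\<forall>\<^sub>F h in at_right 0. dist (measure (density lborel (\<lambda>s. ennreal (g s))) {t..<t+h} / h) (g t) < e"
    unfolding eventually_at_right_field
  proof (intro exI[of _ d] conjI allI impI)
    show "0 < d" by fact
    fix h :: real assume h0: "0 < h" and h1: "h < d"
    note h = h0 h1
    have b: "\<bar>measure (density lborel (\<lambda>s. ennreal (g s))) {t..<t+h} - g t * measure lborel {t..<t+h}\<bar>
        \<le> e/2 * measure lborel {t..<t+h}"
      using h d(2) by (intro avg_bound[OF gm g0 ps, of t "t+h"]) auto
    have ml: "measure lborel {t..<t+h} = h" using h by simp
    have "\<bar>measure (density lborel (\<lambda>s. ennreal (g s))) {t..<t+h} / h - g t\<bar>
      = \<bar>measure (density lborel (\<lambda>s. ennreal (g s))) {t..<t+h} - g t * h\<bar> / h"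
      using h by (simp add: field_simps)
    also have "\<dots> \<le> e/2" using b ml h by (simp add: divide_le_eq)
    finally show "dist (measure (density lborel (\<lambda>s. ennreal (g s))) {t..<t+h} / h) (g t) < e"
      using e by (simp add: dist_real_def)
  qed
qed

lemma const_eq:
  fixes g :: "real \<Rightarrow> real"
  assumes gm: "g \<in> borel_measurable borel" and g0: "\<And>s. 0 \<le> g s"
    and ps: "prob_space (density lborel (\<lambda>s. ennreal (g s)))"
    and gc: "isCont g t" and Ts: "Ts > 0"
    and L: "\<And>h. 0 < h \<Longrightarrow> h \<le> Ts \<Longrightarrow> measure (density lborel (\<lambda>s. ennreal (g s))) {t-h..t} = c * h"
  shows "g t = c"
proof (rule ccontr)
  assume ne: "g t \<noteq> c"
  define e where "e = \<bar>g t - c\<bar> / 2"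
  have e: "e > 0" using ne by (simp add: e_def)
  obtain d where d: "d > 0" "\<And>x. \<bar>x - t\<bar> < d \<Longrightarrow> \<bar>g x - g t\<bar> \<le> e"
    using cont_eps[OF gc e] by auto
  define h where "h = min Ts (d/2)"
  have h: "0 < h" "h \<le> Ts" "h < d" using d Ts by (auto simp: h_def)
  have b: "\<bar>measure (density lborel (\<lambda>s. ennreal (g s))) {t-h..t} - g t * measure lborel {t-h..t}\<bar>
        \<le> e * measure lborel {t-h..t}"
    using h d(2) by (intro avg_bound[OF gm g0 ps, of "t-h" t]) auto
  have "measure lborel {t-h..t} = h" using h by simp
  with b L[OF h(1,2)] have "\<bar>c * h - g t * h\<bar> \<le> e * h" by simp
  then have "\<bar>c - g t\<bar> * h \<le> e * h" by (simp add: left_diff_distrib[symmetric] abs_mult h(1) less_imp_le)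
  then have "\<bar>c - g t\<bar> \<le> e" using h(1) by simp
  then show False using e by (simp add: e_def abs_minus_commute)
qed


lemma omega_eq:
  fixes \<phi> :: "real \<Rightarrow> real" and t Ts :: real
  assumes "Ts > 0"
  shows "(LBINT u=0..Ts. \<phi> u) = (\<integral>s. indicator {t-Ts<..<t} s * \<phi> (t - s) \<partial>lborel)"
proof -
  have "(LBINT u=0..Ts. \<phi> u) = (\<integral>u. indicator {0<..<Ts} u * \<phi> u \<partial>lborel)"
    using assms by (simp add: interval_lebesgue_integral_def set_lebesgue_integral_def zero_ereal_def)
  also have "\<dots> = \<bar>-1\<bar> *\<^sub>R (\<integral>s. indicator {0<..<Ts} (t + (-1) * s) * \<phi> (t + (-1) * s) \<partial>lborel)"
    by (rule lborel_integral_real_affine) simp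
  also have "\<dots> = (\<integral>s. indicator {t-Ts<..<t} s * \<phi> (t - s) \<partial>lborel)"
    by (simp, rule Bochner_Integration.integral_cong) (auto simp: indicator_def)
  finally show ?thesis .
qed


lemma ae_const:
  fixes g :: "real \<Rightarrow> real" and I :: "real set"
  assumes gm: "g \<in> borel_measurable borel" and g0: "\<And>s. 0 \<le> g s"
    and ps: "prob_space (density lborel (\<lambda>s. ennreal (g s)))"
    and I: "I \<in> sets borel" "emeasure lborel I < \<infinity>"
    and L: "\<And>B. B \<in> sets borel \<Longrightarrow> B \<subseteq> I \<Longrightarrow> measure (density lborel (\<lambda>s. ennreal (g s))) B = c * measure lborel B"
  shows "AE s in lborel. s \<in> I \<longrightarrow> g s = c"
proof -
  have gi: "integrable lborel g" by (rule dens_integrable[OF gm g0 ps])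
  have i1: "integrable lborel (\<lambda>s. g s * indicator I s)"
    using integrable_mult_indicator[of I lborel g] gi I by (simp add: mult.commute)
  have i2: "integrable lborel (\<lambda>s. c * indicator I s)"
    using integrable_indicator[of I lborel] I by simp
  have "AE s in lborel. g s * indicator I s = c * indicator I s"
  proof (rule density_unique_real[OF i1 i2])
    fix A :: "real set" assume A: "A \<in> sets lborel"
    have AI: "A \<inter> I \<in> sets borel" using A I by auto
    have fin: "emeasure lborel (A \<inter> I) < \<infinity>"
      using emeasure_mono[of "A \<inter> I" I lborel] I by (simp add: order.strict_trans1)
    have "(LINT x:A|lborel. g x * indicator I x) = (LINT x:A \<inter> I|lborel. g x)"
      unfolding set_lebesgue_integral_def
      by (rule Bochner_Integration.integral_cong) (auto simp: indicator_def)
    also have "\<dots> = measure (density lborel (\<lambda>s. ennreal (g s))) (A \<inter> I)"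
      using dens_measure[OF gm g0 ps AI] by simp
    also have "\<dots> = c * measure lborel (A \<inter> I)" using L[OF AI] by simp
    also have "\<dots> = (LINT x:A|lborel. c * indicator I x)"
      unfolding set_lebesgue_integral_def
      using fin AI
      by (simp add: indicator_inter_arith[symmetric] mult.left_commute less_top[symmetric])
    finally show "(LINT x:A|lborel. g x * indicator I x) = (LINT x:A|lborel. c * indicator I x)" .
  qed
  then show ?thesis by eventually_elim (auto simp: indicator_def)
qed


lemma prec_calc:
  fixes g \<phi> :: "real \<Rightarrow> real" and t Ts \<beta> c :: real
  assumes gm: "g \<in> borel_measurable borel" and g0: "\<And>s. 0 \<le> g s"
    and ps: "prob_space (density lborel (\<lambda>s. ennreal (g s)))"
    and \<phi>m: "\<phi> \<in> borel_measurable borel" and \<phi>b: "\<And>u. 0 \<le> u \<Longrightarrow> 0 \<le> \<phi> u \<and> \<phi> u \<le> 1"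
    and Ts: "Ts > 0" and adj1: "\<forall>u \<ge> Ts. \<phi> u = \<beta>"
    and L: "\<And>B. B \<in> sets borel \<Longrightarrow> B \<subseteq> {t-Ts..t} \<Longrightarrow> measure (density lborel (\<lambda>s. ennreal (g s))) B = c * measure lborel B"
  shows "(LINT s:{..t}|density lborel (\<lambda>s. ennreal (g s)). \<phi> (t - s))
     = \<beta> * (measure (density lborel (\<lambda>s. ennreal (g s))) {..t} - c * Ts) + c * (LBINT u=0..Ts. \<phi> u)"
proof -
  let ?D = "density lborel (\<lambda>s. ennreal (g s))"
  let ?I = "{t-Ts<..<t}"
  note [measurable] = gm \<phi>m
  interpret D: prob_space ?D by (rule ps)
  have gi: "integrable lborel g" by (rule dens_integrable[OF gm g0 ps])
  have ae1: "AE s in lborel. s \<in> ?I \<longrightarrow> g s = c"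
  proof (rule ae_const[OF gm g0 ps])
    show "emeasure lborel ?I < \<infinity>" using Ts by simp
    fix B :: "real set" assume B: "B \<in> sets borel" "B \<subseteq> ?I"
    then have "B \<subseteq> {t-Ts..t}" by auto
    then show "measure ?D B = c * measure lborel B" by (rule L[OF B(1)])
  qed simp
  have ae: "AE s in lborel. g s * (indicator {..t} s * \<phi> (t - s))
      = \<beta> * (g s * indicator {..t-Ts} s) + c * (indicator ?I s * \<phi> (t - s))"
    using ae1 AE_lborel_singleton[of t]
  proof eventually_elim
    case (elim s)
    show ?case
    proof (cases "s \<le> t - Ts")
      case True
      then have "\<phi> (t - s) = \<beta>" using adj1 by auto
      with True Ts show ?thesis by (auto simp: indicator_def)
    next
      case False
      with elim show ?thesis by (auto simp: indicator_def)
    qed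
  qed
  have i1: "integrable lborel (\<lambda>s. g s * indicator {..t-Ts} s)"
    using integrable_mult_indicator[of "{..t-Ts}" lborel g] gi by (simp add: mult.commute)
  have i2: "integrable lborel (\<lambda>s. indicator ?I s * \<phi> (t - s))"
  proof -
    have "integrable lborel (\<lambda>s. indicator ?I s *\<^sub>R \<phi> (t - s))"
    proof (rule integrableI_bounded_set_indicator[where B=1])
      show "emeasure lborel ?I < \<infinity>" using Ts by simp
      show "AE x in lborel. x \<in> ?I \<longrightarrow> norm (\<phi> (t - x)) \<le> 1"
      proof (rule AE_I2, rule impI)
        fix x assume "x \<in> ?I"
        then have "0 \<le> t - x" by simp
        then show "norm (\<phi> (t - x)) \<le> 1" using \<phi>b[of "t - x"] by simp
      qed
    qed simp_all
    then show ?thesis by simp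
  qed
  have "(LINT s:{..t}|?D. \<phi> (t - s)) = (\<integral>s. g s * (indicator {..t} s * \<phi> (t - s)) \<partial>lborel)"
    unfolding set_lebesgue_integral_def
    using integral_density[of "\<lambda>s. indicator {..t} s *\<^sub>R \<phi> (t - s)" lborel g] g0
    by simp
  also have "\<dots> = (\<integral>s. \<beta> * (g s * indicator {..t-Ts} s) + c * (indicator ?I s * \<phi> (t - s)) \<partial>lborel)"
    by (rule integral_cong_AE) (simp_all add: ae)
  also have "\<dots> = \<beta> * (\<integral>s. g s * indicator {..t-Ts} s \<partial>lborel) + c * (\<integral>s. indicator ?I s * \<phi> (t - s) \<partial>lborel)"
    using i1 i2 by (simp add: Bochner_Integration.integral_add)
  also have "(\<integral>s. g s * indicator {..t-Ts} s \<partial>lborel) = measure ?D {..t-Ts}"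
    using dens_measure[OF gm g0 ps, of "{..t-Ts}"] by (simp add: set_lebesgue_integral_def mult.commute)
  also have "measure ?D {..t-Ts} = measure ?D {..t} - measure ?D {t-Ts<..t}"
  proof -
    have "{..t} = {..t-Ts} \<union> {t-Ts<..t}" "{..t-Ts} \<inter> {t-Ts<..t} = {}" using Ts by auto
    then have "measure ?D {..t} = measure ?D {..t-Ts} + measure ?D {t-Ts<..t}"
      using D.finite_measure_Union[of "{..t-Ts}" "{t-Ts<..t}"] by simp
    then show ?thesis by simp
  qed
  also have "measure ?D {t-Ts<..t} = c * Ts"
  proof -
    have "{t-Ts<..t} \<subseteq> {t-Ts..t}" by auto
    from L[OF _ this] show ?thesis using Ts by simp
  qed
  also have "(\<integral>s. indicator ?I s * \<phi> (t - s) \<partial>lborel) = (LBINT u=0..Ts. \<phi> u)"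
    using omega_eq[OF Ts, of \<phi> t] by simp
  finally show ?thesis .
qed


lemma cond_setup:
  fixes P :: "'a measure" and T :: "'a \<Rightarrow> real" and h :: "real \<Rightarrow> real"
  assumes ps: "prob_space P" and Tm: "T \<in> borel_measurable P"
    and X: "X \<in> sets P" and Xp: "measure P X > 0"
    and cd: "cond_density P T X h"
  shows "h \<in> borel_measurable borel" "\<And>s. 0 \<le> h s" "prob_space (density lborel (\<lambda>s. ennreal (h s)))"
    and "\<And>B. B \<in> sets borel \<Longrightarrow> cprob P {\<omega> \<in> space P. T \<omega> \<in> B} X = measure (density lborel (\<lambda>s. ennreal (h s))) B"
    and "distr (uniform_measure P X) lborel T = density lborel (\<lambda>s. ennreal (h s))"
proof -
  interpret P: prob_space P by (rule ps)
  have e1: "emeasure P X \<noteq> 0" "emeasure P X \<noteq> \<infinity>"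
    using Xp by (auto simp: P.emeasure_eq_measure)
  interpret Q: prob_space "uniform_measure P X" by (rule prob_space_uniform_measure[OF e1])
  have h0: "\<And>s. 0 \<le> h s" and dist: "distributed (uniform_measure P X) lborel T (\<lambda>s. ennreal (h s))"
    using cd by (auto simp: cond_density_def)
  show "\<And>s. 0 \<le> h s" by (rule h0)
  have dd: "distr (uniform_measure P X) lborel T = density lborel (\<lambda>s. ennreal (h s))"
    and hm: "(\<lambda>s. ennreal (h s)) \<in> borel_measurable lborel"
    and TQ: "T \<in> measurable (uniform_measure P X) lborel"
    using dist by (auto simp: distributed_def)
  show "distr (uniform_measure P X) lborel T = density lborel (\<lambda>s. ennreal (h s))" by (rule dd)
  have "(\<lambda>s. enn2real (ennreal (h s))) \<in> borel_measurable borel"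
    using hm by (intro borel_measurable_enn2real) simp
  then show "h \<in> borel_measurable borel" using h0 by simp
  show "prob_space (density lborel (\<lambda>s. ennreal (h s)))"
    using Q.prob_space_distr[OF TQ] dd by simp
  fix B :: "real set" assume B: "B \<in> sets borel"
  have sB: "{\<omega> \<in> space P. T \<omega> \<in> B} \<in> sets P" using Tm B by measurable
  have "measure (density lborel (\<lambda>s. ennreal (h s))) B = measure (uniform_measure P X) (T -` B \<inter> space (uniform_measure P X))"
    using measure_distr[OF TQ, of B] B dd by simp
  also have "T -` B \<inter> space (uniform_measure P X) = {\<omega> \<in> space P. T \<omega> \<in> B}" by auto
  also have "measure (uniform_measure P X) {\<omega> \<in> space P. T \<omega> \<in> B} = measure P (X \<inter> {\<omega> \<in> space P. T \<omega> \<in> B}) / measure P X"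
    using measure_uniform_measure[OF e1 sB] .
  finally show "cprob P {\<omega> \<in> space P. T \<omega> \<in> B} X = measure (density lborel (\<lambda>s. ennreal (h s))) B"
    by (simp add: cprob_def Int_commute)
qed

theorem mainTheorem2:
  fixes P :: "'a measure" and T :: "'a \<Rightarrow> real" and A :: "real \<Rightarrow> 'a \<Rightarrow> bool"
    and Mk :: "'a \<Rightarrow> 'b" and R :: "'b set"
    and \<phi> g f :: "real \<Rightarrow> real" and t Ts \<beta> :: real
  assumes "prob_space P"
    and "T \<in> borel_measurable P"
    and "\<forall>s. elig P A s \<in> sets P"
    and "{\<omega> \<in> space P. Mk \<omega> \<in> R} \<in> sets P"
    and "measure P (elig P A t) > 0"
    and "cond_density P T (elig P A t) g" and "isCont g t"
    and "cond_density P T ({\<omega> \<in> space P. T \<omega> \<le> t} \<inter> elig P A t) f"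
    and "is_recency_fn P T A Mk R t \<phi>"
    and "Ts > 0"
    and adj1: "\<forall>u \<ge> Ts. \<phi> u = \<beta>"
    and adj2: "\<forall>u \<in> {0..Ts}. f (t - u) = f t"
    and "MDRI \<phi> Ts - \<beta> * Ts \<noteq> 0"
    and "prevalence P T A t < 1"
    and "continuous_on UNIV (prevalence P T A)"
  shows "(hazard_quot P T A t \<longlongrightarrow> incidence P T A t) (at_right 0)
    \<and> P_rec P T A Mk R t = (MDRI \<phi> Ts - \<beta> * Ts) * incidence P T A t * (1 - prevalence P T A t)
                            + prevalence P T A t * \<beta>
    \<and> incidence P T A t = (P_rec P T A Mk R t - \<beta> * prevalence P T A t)
                          / ((1 - prevalence P T A t) * (MDRI \<phi> Ts - \<beta> * Ts))"
proof -
  note ps = assms(1) and Tm = assms(2) and Em = assms(3) and Rm = assms(4) and Ep = assms(5)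
    and cdg = assms(6) and gc = assms(7) and cdf = assms(8) and rec = assms(9) and Ts = assms(10)
    and Om = assms(13) and p1 = assms(14)
  interpret P: prob_space P by (rule ps)
  define E where "E = elig P A t"
  define D where "D = density lborel (\<lambda>s. ennreal (g s))"
  define p where "p = prevalence P T A t"
  have E: "E \<in> sets P" "measure P E > 0" using Em Ep by (auto simp: E_def)
  note G = cond_setup[OF ps Tm E cdg[folded E_def], folded D_def]
  interpret D: prob_space D by (rule G(3))
  have KB: "\<And>B. B \<in> sets borel \<Longrightarrow> cprob P {\<omega> \<in> space P. T \<omega> \<in> B} E = measure D B" by (rule G(4))
  have pD: "p = measure D {..t}"
    using KB[of "{..t}"] by (simp add: p_def prevalence_def E_def)
  have sD: "sets D = sets borel" by (simp add: D_def)
  have Dt: "measure D {t} = 0"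
  proof -
    have "\<bar>measure D {t} - g t * measure lborel {t}\<bar> \<le> 0 * measure lborel {t}"
      unfolding D_def by (rule avg_bound[OF G(1,2,3)[unfolded D_def], of t t "g t" 0 "{t}"]) auto
    then show ?thesis by (simp add: antisym)
  qed
  have Dge: "measure D {t..} = 1 - p"
  proof -
    have "measure D {..t} = measure D {..<t} + measure D {t}"
    proof -
      have "{..t} = {..<t} \<union> {t}" by auto
      moreover have "measure D ({..<t} \<union> {t}) = measure D {..<t} + measure D {t}"
        by (rule D.finite_measure_Union) (auto simp: sD)
      ultimately show ?thesis by simp
    qed
    moreover have "measure D {t..} = 1 - measure D {..<t}"
    proof -
      have "space D - {..<t} = {t..}" by (auto simp: D_def)
      moreover have "D.prob (space D - {..<t}) = 1 - D.prob {..<t}"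
        by (rule D.prob_compl) (simp add: sD)
      ultimately show ?thesis by simp
    qed
    ultimately show ?thesis using pD Dt by simp
  qed
  have p1': "1 - p > 0" using p1 by (simp add: p_def)
  have HQ: "hazard_quot P T A t dt = measure D {t..<t+dt} / (1 - p) / dt" if dt: "dt > 0" for dt
  proof -
    define S where "S = {\<omega> \<in> space P. t \<le> T \<omega> \<and> T \<omega> < t + dt}"
    define U where "U = {\<omega> \<in> space P. t \<le> T \<omega>}"
    have S: "S = {\<omega> \<in> space P. T \<omega> \<in> {t..<t+dt}}" by (auto simp: S_def)
    have U: "U = {\<omega> \<in> space P. T \<omega> \<in> {t..}}" by (auto simp: U_def)
    have SU: "S \<inter> (U \<inter> E) = S \<inter> E" by (auto simp: S_def U_def)
    have "cprob P S (U \<inter> E) = cprob P S E / cprob P U E"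
      using E(2) by (simp add: cprob_def SU)
    also have "\<dots> = measure D {t..<t+dt} / (1 - p)"
      using KB[of "{t..<t+dt}"] KB[of "{t..}"] Dge by (simp add: S U)
    finally show ?thesis
      by (simp add: hazard_quot_def S_def U_def E_def)
  qed
  have lim0: "((\<lambda>h. measure D {t..<t+h} / h) \<longlongrightarrow> g t) (at_right 0)"
    using hazard_lim[OF G(1,2,3)[unfolded D_def] gc] by (simp add: D_def)
  have lim1: "(hazard_quot P T A t \<longlongrightarrow> g t / (1 - p)) (at_right 0)"
  proof -
    have l: "((\<lambda>h. measure D {t..<t+h} / h / (1 - p)) \<longlongrightarrow> g t / (1 - p)) (at_right 0)"
      by (intro tendsto_divide lim0 tendsto_const) (use p1' in simp)
    have ev: "\<forall>\<^sub>F h in at_right 0. measure D {t..<t+h} / h / (1 - p) = hazard_quot P T A t h"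
      unfolding eventually_at_right_field
      by (intro exI[of _ 1]) (auto simp: HQ)
    show ?thesis using l tendsto_cong[OF ev] by simp
  qed
  have inc: "incidence P T A t = g t / (1 - p)"
    unfolding incidence_def using lim1 by (intro tendsto_Lim) auto
  define c where "c = p * f t"
  have L: "measure D B = c * measure lborel B" if B: "B \<in> sets borel" "B \<subseteq> {t-Ts..t}" for B
  proof (cases "p = 0")
    case True
    have "measure D B \<le> measure D {..t}"
      by (rule D.finite_measure_mono) (use B in \<open>auto simp: sD\<close>)
    then have "measure D B = 0" using True pD by (simp add: antisym)
    then show ?thesis using True by (simp add: c_def)
  next
    case False
    have p0: "p > 0" using False pD measure_nonneg[of D "{..t}"] by linarith
    define X where "X = {\<omega> \<in> space P. T \<omega> \<le> t} \<inter> E"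
    have Xs: "X \<in> sets P" unfolding X_def using Tm E(1) by measurable
    have pX: "measure P X = p * measure P E"
      using E(2) by (simp add: p_def prevalence_def cprob_def X_def E_def)
    have Xp: "measure P X > 0" using pX p0 E(2) by simp
    have cdX: "cond_density P T X f" using cdf by (simp add: X_def E_def)
    note F = cond_setup[OF ps Tm Xs Xp cdX]
    have Bs: "{\<omega> \<in> space P. T \<omega> \<in> B} \<in> sets P" using Tm B(1) by measurable
    have BX: "{\<omega> \<in> space P. T \<omega> \<in> B} \<inter> X = {\<omega> \<in> space P. T \<omega> \<in> B} \<inter> E"
      using B(2) by (auto simp: X_def)
    have "measure (density lborel (\<lambda>s. ennreal (f s))) B = measure D B / p"
      using F(4)[OF B(1)] KB[OF B(1)] pX E(2) p0 by (simp add: cprob_def BX) (metis divide_divide_eq_left mult.commute)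
    moreover have "measure (density lborel (\<lambda>s. ennreal (f s))) B = f t * measure lborel B"
    proof -
      have "emeasure (density lborel (\<lambda>s. ennreal (f s))) B = (\<integral>\<^sup>+ x. ennreal (f x) * indicator B x \<partial>lborel)"
        using F(1) B(1) by (simp add: emeasure_density)
      also have "\<dots> = (\<integral>\<^sup>+ x. ennreal (f t) * indicator B x \<partial>lborel)"
      proof (rule nn_integral_cong)
        fix x show "ennreal (f x) * indicator B x = ennreal (f t) * indicator B x"
        proof (cases "x \<in> B")
          case True
          then have "t - x \<in> {0..Ts}" using B(2) by auto
          then have "f (t - (t - x)) = f t" using adj2 by blast
          then show ?thesis by simp
        qed simp
      qed
      also have "\<dots> = ennreal (f t) * emeasure lborel B"
        using B(1) by (simp add: nn_integral_cmult_indicator)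
      finally show ?thesis
        using F(2)[of t] by (simp add: measure_def enn2real_mult)
    qed
    ultimately show ?thesis using p0 by (simp add: c_def field_simps)
  qed
  have gtc: "g t = c"
  proof (rule const_eq[OF G(1,2,3)[unfolded D_def] gc Ts])
    fix h :: real assume h: "0 < h" "h \<le> Ts"
    have "measure D {t-h..t} = c * measure lborel {t-h..t}" using h by (intro L) auto
    then show "measure (density lborel (\<lambda>s. ennreal (g s))) {t-h..t} = c * h"
      using h by (simp add: D_def)
  qed
  have rec': "\<phi> \<in> borel_measurable borel" "\<And>u. 0 \<le> u \<Longrightarrow> 0 \<le> \<phi> u \<and> \<phi> u \<le> 1"
    and recB: "\<And>B. B \<in> sets borel \<Longrightarrow> B \<subseteq> {..t} \<Longrightarrow>
        cprob P {\<omega> \<in> space P. Mk \<omega> \<in> R \<and> T \<omega> \<in> B} E =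
        (LINT s:B | distr (uniform_measure P E) lborel T. \<phi> (t - s))"
    using rec unfolding is_recency_fn_def E_def by auto
  have Prec: "P_rec P T A Mk R t = (LINT s:{..t}|D. \<phi> (t - s))"
    using recB[of "{..t}"] G(5) by (simp add: P_rec_def E_def D_def)
  have PC: "(LINT s:{..t}|D. \<phi> (t - s)) = \<beta> * (p - c * Ts) + c * MDRI \<phi> Ts"
    unfolding D_def MDRI_def pD
  proof (rule prec_calc[OF G(1,2,3)[unfolded D_def] rec'(1) _ Ts adj1])
    fix u :: real assume "0 \<le> u" then show "0 \<le> \<phi> u \<and> \<phi> u \<le> 1" by (rule rec'(2))
  next
    fix B :: "real set" assume "B \<in> sets borel" "B \<subseteq> {t-Ts..t}"
    then show "measure (density lborel (\<lambda>s. ennreal (g s))) B = c * measure lborel B"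
      by (rule L[unfolded D_def])
  qed
  have P1: "P_rec P T A Mk R t = (MDRI \<phi> Ts - \<beta> * Ts) * incidence P T A t * (1 - p) + p * \<beta>"
  proof -
    have ci: "c = incidence P T A t * (1 - p)" using inc gtc p1' by simp
    show ?thesis unfolding Prec PC ci by (simp add: algebra_simps)
  qed
  have P2: "incidence P T A t = (P_rec P T A Mk R t - \<beta> * p) / ((1 - p) * (MDRI \<phi> Ts - \<beta> * Ts))"
  proof -
    have d: "(1 - p) * (MDRI \<phi> Ts - \<beta> * Ts) \<noteq> 0" using p1' Om by simp
    have "P_rec P T A Mk R t - \<beta> * p = incidence P T A t * ((1 - p) * (MDRI \<phi> Ts - \<beta> * Ts))"
      unfolding P1 by (simp add: algebra_simps)
    then show ?thesis using d by (simp add: eq_divide_eq)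
  qed
  have l: "(hazard_quot P T A t \<longlongrightarrow> incidence P T A t) (at_right 0)" using lim1 by (simp only: inc)
  show ?thesis using l P1[unfolded p_def] P2[unfolded p_def] by (intro conjI)
qed

end
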